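(* Let $(S,\ast)$ be an adequate partial semigroup and let $A\subseteq S$. If there is an idempotent $p\in\overline{A}\cap J_\delta(S)$, then there is a nonempty set $T$ of functions such that (i) for all $f\in T$, $\mathrm{domain}(f)\in\omega$ and $\mathrm{range}(f)\subseteq A$; (ii) for all $f\in T$ and all $x\in B_f(T)$, $B_{f^\frown x}(T)\subseteq x^{-1}B_f(T)$; (iii) for all $F\in\mathcal{P}_f(T)$, $\bigcap_{f\in F}B_f(T)$ is a $J_\delta$-set. Moreover, there is a downward directed family $\langle A_F\rangle_{F\in I}$ of subsets of $A$ such that (a) for all $F\in I$ and all $x\in A_F$ there exists $G\in I$ with $A_G\subseteq x^{-1}A_F$; (b) for each $\mathcal{F}\in\mathcal{P}_f(I)$, $\bigcap_{F\in\mathcal{F}}A_F$ is a $J_\delta$-set.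
   Context: A partial semigroup is a pair $(S,\ast)$ where $\ast$ is an operation defined on a subset of $S\times S$ such that $(x\ast y)\ast z=x\ast(y\ast z)$ in the sense that if either side is defined, so is the other and they are equal. $\phi_S(s)=\{t: s\ast t\text{ defined}\}$, $\sigma_S(H)=\bigcap_{s\in H}\phi_S(s)$ for $H\in\mathcal{P}_f(S)$ (finite nonempty subsets); $S$ is adequate if all $\sigma_S(H)\ne\emptyset$. $\overline{A}=\{p\in\beta S: A\in p\}$. $\delta S=\bigcap_{x\in S}\overline{\phi_S(x)}$, with operation $p\ast q=\{B\subseteq S:\{s: s^{-1}B\in q\}\in p\}$, where $s^{-1}B=\{t\in\phi_S(s): s\ast t\in B\}$. A sequence $\langle y_n\rangle$ in $S$ is adequate if $\prod_{n\in F}y_n$ is defined for every $F\in\mathcal{P}_f(\mathbb{N})$ and for every $K\in\mathcal{P}_f(S)$ there is $m$ with $\prod_{n\in F}y_n\in\sigma_S(K)$ whenever $\min F\ge m$; $\mathcal{T}_S$ is the set of adequate sequences. For $W\in\mathcal{P}_f(S)$, $a\in S$, $W\ast a=\{w\ast a: w\in W,\ w\ast a\text{ defined}\}$. $B\subseteq S$ is a $J_\delta$-set if for every $F\in\mathcal{P}_f(\mathcal{T}_S)$ and $W\in\mathcal{P}_f(S)$ there exist $a\in\sigma_S(W)$ and $H\in\mathcal{P}_f(\mathbb{N})$ with $\prod_{t\in H}f(t)\in\sigma_S(W\ast a)$ and $a\ast\prod_{t\in H}f(t)\in B$ for each $f\in F$; $J_\delta(S)=\{p\in\delta S:\text{every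 member of }p\text{ is a }J_\delta\text{-set}\}$. $\omega$ is the first infinite ordinal, $[n]=\{0,\dots,n-1\}$. For $f$ with domain $[n]$ and $x\in S$, $f^\frown x=f\cup\{(n,x)\}$. For a set $T$ of such functions and $f\in T$, $B_f(T)=\{x: f^\frown x\in T\}$. A family $\langle A_F\rangle_{F\in I}$ is downward directed if for all $F,G\in I$ there is $H\in I$ with $A_H\subseteq A_F\cap A_G$. *)

theory Defs
  imports Main
begin

text \<open>A partial operation on the type 'a (the type plays the role of S):
  mult s t = Some (s * t) if defined, None otherwise.\<close>
type_synonym 'a pop = "'a \<Rightarrow> 'a \<Rightarrow> 'a option"

definition partial_semigroup :: "'a pop \<Rightarrow> bool" where
  "partial_semigroup mult \<longleftrightarrow>
     (\<forall>x y z. Option.bind (mult x y) (\<lambda>w. mult w z) = Option.bind (mult y z) (\<lambda>w. mult x w))"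

definition phi :: "'a pop \<Rightarrow> 'a \<Rightarrow> 'a set" where
  "phi mult s = {t. mult s t \<noteq> None}"

definition sigma :: "'a pop \<Rightarrow> 'a set \<Rightarrow> 'a set" where
  "sigma mult H = (\<Inter>s\<in>H. phi mult s)"

definition adequate :: "'a pop \<Rightarrow> bool" where
  "adequate mult \<longleftrightarrow> (\<forall>H. finite H \<and> H \<noteq> {} \<longrightarrow> sigma mult H \<noteq> {})"

definition is_ultrafilter :: "'a set set \<Rightarrow> bool" where
  "is_ultrafilter p \<longleftrightarrow>
     {} \<notin> p \<and> UNIV \<in> p \<and>
     (\<forall>B C. B \<in> p \<and> C \<in> p \<longrightarrow> B \<inter> C \<in> p) \<and>
     (\<forall>B C. B \<in> p \<and> B \<subseteq> C \<longrightarrow> C \<in> p) \<and>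
     (\<forall>B. B \<in> p \<or> - B \<in> p)"

definition deltaS :: "'a pop \<Rightarrow> 'a set set set" where
  "deltaS mult = {p. is_ultrafilter p \<and> (\<forall>x. phi mult x \<in> p)}"

definition linv :: "'a pop \<Rightarrow> 'a \<Rightarrow> 'a set \<Rightarrow> 'a set" where
  "linv mult s B = {t. \<exists>u. mult s t = Some u \<and> u \<in> B}"

definition umult :: "'a pop \<Rightarrow> 'a set set \<Rightarrow> 'a set set \<Rightarrow> 'a set set" where
  "umult mult p q = {B. {s. linv mult s B \<in> q} \<in> p}"

fun lprod :: "'a pop \<Rightarrow> 'a list \<Rightarrow> 'a option" where
  "lprod mult [] = None"
| "lprod mult [a] = Some a"
| "lprod mult (a # b # xs) = Option.bind (lprod mult (b # xs)) (\<lambda>w. mult a w)"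

definition fprod :: "'a pop \<Rightarrow> (nat \<Rightarrow> 'a) \<Rightarrow> nat set \<Rightarrow> 'a option" where
  "fprod mult y F = lprod mult (map y (sorted_list_of_set F))"

definition adequate_seq :: "'a pop \<Rightarrow> (nat \<Rightarrow> 'a) \<Rightarrow> bool" where
  "adequate_seq mult y \<longleftrightarrow>
     (\<forall>F. finite F \<and> F \<noteq> {} \<longrightarrow> fprod mult y F \<noteq> None) \<and>
     (\<forall>K. finite K \<and> K \<noteq> {} \<longrightarrow>
        (\<exists>m. \<forall>F. finite F \<and> F \<noteq> {} \<and> Min F \<ge> m \<longrightarrow>
               (\<exists>u. fprod mult y F = Some u \<and> u \<in> sigma mult K)))"

definition rtimes :: "'a pop \<Rightarrow> 'a set \<Rightarrow> 'a \<Rightarrow> 'a set" where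
  "rtimes mult W a = {v. \<exists>w\<in>W. mult w a = Some v}"

definition Jdelta_set :: "'a pop \<Rightarrow> 'a set \<Rightarrow> bool" where
  "Jdelta_set mult B \<longleftrightarrow>
     (\<forall>F W. finite F \<and> F \<noteq> {} \<and> (\<forall>f\<in>F. adequate_seq mult f) \<and> finite W \<and> W \<noteq> {} \<longrightarrow>
        (\<exists>a\<in>sigma mult W. \<exists>H. finite H \<and> H \<noteq> {} \<and>
           (\<forall>f\<in>F. \<exists>u. fprod mult f H = Some u \<and> u \<in> sigma mult (rtimes mult W a) \<and>
                        (\<exists>v. mult a u = Some v \<and> v \<in> B))))"

definition Jdelta :: "'a pop \<Rightarrow> 'a set set set" where
  "Jdelta mult = {p \<in> deltaS mult. \<forall>B\<in>p. Jdelta_set mult B}"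

text \<open>Functions with domain [n] are represented as lists of length n;
  f\<frown>x is f @ [x], and B_f(T) = {x. f @ [x] \<in> T}.\<close>
definition Bf :: "'a list \<Rightarrow> 'a list set \<Rightarrow> 'a set" where
  "Bf f T = {x. f @ [x] \<in> T}"

end

theory Submission
  imports Defs
begin

definition starp :: "'a pop \<Rightarrow> 'a set set \<Rightarrow> 'a set \<Rightarrow> 'a set" where
  "starp mult p D = {y\<in>D. linv mult y D \<in> p}"

definition goodp :: "'a pop \<Rightarrow> 'a set set \<Rightarrow> 'a set \<Rightarrow> 'a set \<Rightarrow> bool" where
  "goodp mult p A D \<longleftrightarrow> D \<in> p \<and> D \<subseteq> A \<and> (\<forall>x\<in>D. linv mult x D \<in> p)"

definition stepp :: "'a pop \<Rightarrow> 'a set set \<Rightarrow> 'a set \<Rightarrow> 'a set \<Rightarrow> 'a \<Rightarrow> 'a set" where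
  "stepp mult p A D x = starp mult p (linv mult x D \<inter> A)"

inductive_set tree :: "('a list \<Rightarrow> 'a set) \<Rightarrow> 'a list set" for C where
  tnil: "[] \<in> tree C"
| tsnoc: "f \<in> tree C \<Longrightarrow> x \<in> C f \<Longrightarrow> f @ [x] \<in> tree C"

lemma linv_mono: "B \<subseteq> D \<Longrightarrow> linv mult x B \<subseteq> linv mult x D"
  unfolding linv_def by blast

lemma linv_Int: "linv mult x (B \<inter> D) = linv mult x B \<inter> linv mult x D"
  unfolding linv_def by auto

lemma linv_assoc:
  assumes "partial_semigroup mult" "mult y z = Some u"
  shows "linv mult z (linv mult y D) \<subseteq> linv mult u D"
proof
  fix w assume "w \<in> linv mult z (linv mult y D)"
  then obtain zw v where zw: "mult z w = Some zw" and v: "mult y zw = Some v" "v \<in> D"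
    unfolding linv_def by auto
  have "Option.bind (mult y z) (\<lambda>t. mult t w) = Option.bind (mult z w) (\<lambda>t. mult y t)"
    using assms(1) unfolding partial_semigroup_def by blast
  then have "mult u w = Some v" using assms(2) zw v by simp
  then show "w \<in> linv mult u D" using v unfolding linv_def by auto
qed

locale ctx =
  fixes mult :: "'a pop" and A :: "'a set" and p :: "'a set set"
  assumes ps: "partial_semigroup mult"
    and Ap: "A \<in> p"
    and pJ: "p \<in> Jdelta mult"
    and idem: "umult mult p p = p"
begin

lemma uf: "is_ultrafilter p" using pJ unfolding Jdelta_def deltaS_def by auto

lemma p_int: "B \<in> p \<Longrightarrow> C \<in> p \<Longrightarrow> B \<inter> C \<in> p" using uf unfolding is_ultrafilter_def by blast
lemma p_sup: "B \<in> p \<Longrightarrow> B \<subseteq> C \<Longrightarrow> C \<in> p" using uf unfolding is_ultrafilter_def by blast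

lemma p_J: "B \<in> p \<Longrightarrow> Jdelta_set mult B" using pJ unfolding Jdelta_def by auto

lemma p_Inter: "finite F \<Longrightarrow> F \<noteq> {} \<Longrightarrow> (\<forall>f\<in>F. g f \<in> p) \<Longrightarrow> (\<Inter>f\<in>F. g f) \<in> p"
proof (induction F rule: finite_ne_induct)
  case (singleton x) then show ?case by simp
next
  case (insert x F) then show ?case using p_int by simp
qed

lemma star_in: "D \<in> p \<Longrightarrow> starp mult p D \<in> p"
proof -
  assume D: "D \<in> p"
  then have "{s. linv mult s D \<in> p} \<in> p" using idem unfolding umult_def by blast
  then have "D \<inter> {s. linv mult s D \<in> p} \<in> p" using D p_int by blast
  moreover have "D \<inter> {s. linv mult s D \<in> p} = starp mult p D" unfolding starp_def by auto
  ultimately show ?thesis by simp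
qed

lemma star_sub: "starp mult p D \<subseteq> D" unfolding starp_def by auto

lemma star_linv: "y \<in> starp mult p D \<Longrightarrow> starp mult p (linv mult y D) \<subseteq> linv mult y (starp mult p D)"
proof
  fix z assume y: "y \<in> starp mult p D" and z: "z \<in> starp mult p (linv mult y D)"
  then have zl: "z \<in> linv mult y D" and zp: "linv mult z (linv mult y D) \<in> p"
    unfolding starp_def by auto
  then obtain u where u: "mult y z = Some u" "u \<in> D" unfolding linv_def by auto
  have "linv mult z (linv mult y D) \<subseteq> linv mult u D" using linv_assoc[OF ps u(1)] .
  then have "linv mult u D \<in> p" using zp p_sup by blast
  then have "u \<in> starp mult p D" using u unfolding starp_def by auto
  then show "z \<in> linv mult y (starp mult p D)" using u unfolding linv_def by auto
qed

lemma good_star: "E \<in> p \<Longrightarrow> E \<subseteq> A \<Longrightarrow> goodp mult p A (starp mult p E)"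
proof -
  assume E: "E \<in> p" "E \<subseteq> A"
  have "\<forall>y\<in>starp mult p E. linv mult y (starp mult p E) \<in> p"
  proof
    fix y assume y: "y \<in> starp mult p E"
    then have "linv mult y E \<in> p" unfolding starp_def by auto
    then have "starp mult p (linv mult y E) \<in> p" by (rule star_in)
    then show "linv mult y (starp mult p E) \<in> p" using star_linv[OF y] p_sup by blast
  qed
  then show ?thesis using star_in[OF E(1)] star_sub E(2) unfolding goodp_def by blast
qed

lemma good_step: "goodp mult p A D \<Longrightarrow> x \<in> D \<Longrightarrow>
   goodp mult p A (stepp mult p A D x) \<and> stepp mult p A D x \<subseteq> linv mult x D"
proof -
  assume g: "goodp mult p A D" and x: "x \<in> D"
  then have "linv mult x D \<inter> A \<in> p" using Ap p_int unfolding goodp_def by blast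
  then show ?thesis using good_star[of "linv mult x D \<inter> A"] star_sub[of "linv mult x D \<inter> A"]
    unfolding stepp_def by blast
qed

lemma good_int: "goodp mult p A B \<Longrightarrow> goodp mult p A D \<Longrightarrow> goodp mult p A (B \<inter> D)"
proof -
  assume B: "goodp mult p A B" and D: "goodp mult p A D"
  have "\<forall>x\<in>B \<inter> D. linv mult x (B \<inter> D) \<in> p"
  proof
    fix x assume "x \<in> B \<inter> D"
    then have "linv mult x B \<in> p" "linv mult x D \<in> p" using B D unfolding goodp_def by auto
    then show "linv mult x (B \<inter> D) \<in> p" unfolding linv_Int by (rule p_int)
  qed
  moreover have "B \<inter> D \<in> p" using B D p_int unfolding goodp_def by blast
  moreover have "B \<inter> D \<subseteq> A" using B unfolding goodp_def by blast
  ultimately show ?thesis unfolding goodp_def by blast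
qed

definition CC :: "'a list \<Rightarrow> 'a set" where
  "CC f = foldl (stepp mult p A) (starp mult p A) f"

lemma CC_snoc: "CC (f @ [x]) = stepp mult p A (CC f) x"
  unfolding CC_def by simp

lemma tree_good: "f \<in> tree CC \<Longrightarrow> goodp mult p A (CC f) \<and> set f \<subseteq> A"
proof (induction rule: tree.induct)
  case tnil
  have "CC [] = starp mult p A" unfolding CC_def by (rule foldl_Nil)
  then show ?case using good_star[OF Ap subset_refl] by simp
next
  case (tsnoc f x)
  have g: "goodp mult p A (CC f)" and s: "set f \<subseteq> A" using tsnoc.IH by blast+
  have "x \<in> A" using g tsnoc.hyps(2) unfolding goodp_def by blast
  moreover have "goodp mult p A (CC (f @ [x]))"
    unfolding CC_snoc using good_step[OF g tsnoc.hyps(2)] by blast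
  ultimately show ?case using s by simp
qed

lemma Bf_tree: "f \<in> tree CC \<Longrightarrow> Bf f (tree CC) = CC f"
proof -
  assume f: "f \<in> tree CC"
  have "x \<in> CC f" if "f @ [x] \<in> tree CC" for x
    using that
  proof (cases rule: tree.cases)
    case (tsnoc g y)
    then have "g = f" "y = x" by simp_all
    then show ?thesis using tsnoc by simp
  qed simp
  moreover have "f @ [x] \<in> tree CC" if "x \<in> CC f" for x using tree.tsnoc[OF f that] .
  ultimately show ?thesis unfolding Bf_def by auto
qed

lemma part1: "\<exists>T :: 'a list set. T \<noteq> {} \<and>
            (\<forall>f\<in>T. set f \<subseteq> A) \<and>
            (\<forall>f\<in>T. \<forall>x\<in>Bf f T. Bf (f @ [x]) T \<subseteq> linv mult x (Bf f T)) \<and>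
            (\<forall>F. finite F \<and> F \<noteq> {} \<and> F \<subseteq> T \<longrightarrow> Jdelta_set mult (\<Inter>f\<in>F. Bf f T))"
proof (intro exI[of _ "tree CC"] conjI ballI allI impI)
  show "tree CC \<noteq> {}" using tree.tnil by blast
next
  fix f assume "f \<in> tree CC" then show "set f \<subseteq> A" using tree_good by simp
next
  fix f x assume f: "f \<in> tree CC" and x: "x \<in> Bf f (tree CC)"
  then have x': "x \<in> CC f" using Bf_tree[OF f] by simp
  have "f @ [x] \<in> tree CC" using tree.tsnoc[OF f x'] .
  then have "Bf (f @ [x]) (tree CC) = stepp mult p A (CC f) x"
    using Bf_tree[of "f @ [x]"] CC_snoc[of f x] by simp
  moreover have "stepp mult p A (CC f) x \<subseteq> linv mult x (CC f)"
    using good_step[OF _ x'] tree_good[OF f] by blast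
  ultimately show "Bf (f @ [x]) (tree CC) \<subseteq> linv mult x (Bf f (tree CC))"
    using Bf_tree[OF f] by simp
next
  fix F assume F: "finite F \<and> F \<noteq> {} \<and> F \<subseteq> tree CC"
  have "\<forall>f\<in>F. Bf f (tree CC) \<in> p"
  proof
    fix f assume "f \<in> F"
    then have f: "f \<in> tree CC" using F by blast
    have "CC f \<in> p" using tree_good[OF f] unfolding goodp_def by blast
    then show "Bf f (tree CC) \<in> p" using Bf_tree[OF f] by simp
  qed
  then have "(\<Inter>f\<in>F. Bf f (tree CC)) \<in> p" using p_Inter[of F "\<lambda>f. Bf f (tree CC)"] F by blast
  then show "Jdelta_set mult (\<Inter>f\<in>F. Bf f (tree CC))" by (rule p_J)
qed

lemma part2: "\<exists>(I :: 'a list set set) (AF :: 'a list set \<Rightarrow> 'a set). I \<noteq> {} \<and>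
            (\<forall>F\<in>I. \<forall>G\<in>I. \<exists>H\<in>I. AF H \<subseteq> AF F \<inter> AF G) \<and>
            (\<forall>F\<in>I. AF F \<subseteq> A) \<and>
            (\<forall>F\<in>I. \<forall>x\<in>AF F. \<exists>G\<in>I. AF G \<subseteq> linv mult x (AF F)) \<and>
            (\<forall>\<F>. finite \<F> \<and> \<F> \<noteq> {} \<and> \<F> \<subseteq> I \<longrightarrow> Jdelta_set mult (\<Inter>F\<in>\<F>. AF F))"
proof -
  define enc :: "'a set \<Rightarrow> 'a list set" where "enc B = (\<lambda>x. [x]) ` B" for B
  define AF :: "'a list set \<Rightarrow> 'a set" where "AF F = {x. [x] \<in> F}" for F
  define I where "I = enc ` {D. goodp mult p A D}"
  have AFenc: "AF (enc B) = B" for B unfolding AF_def enc_def by auto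
  have I_iff: "goodp mult p A (AF F)" if FI: "F \<in> I" for F
  proof -
    obtain D where D: "goodp mult p A D" "F = enc D" using FI unfolding I_def by blast
    show ?thesis using D AFenc[of D] by simp
  qed
  have encI: "goodp mult p A D \<Longrightarrow> enc D \<in> I" for D unfolding I_def by blast
  show ?thesis
  proof (intro exI[of _ I] exI[of _ AF] conjI ballI allI impI)
    show "I \<noteq> {}" using encI[OF good_star[OF Ap subset_refl]] by blast
  next
    fix F G assume "F \<in> I" "G \<in> I"
    then have "goodp mult p A (AF F)" "goodp mult p A (AF G)" using I_iff by blast+
    then have "enc (AF F \<inter> AF G) \<in> I" using good_int encI by blast
    moreover have "AF (enc (AF F \<inter> AF G)) \<subseteq> AF F \<inter> AF G" unfolding AFenc by (rule subset_refl)
    ultimately show "\<exists>H\<in>I. AF H \<subseteq> AF F \<inter> AF G" by (rule bexI[rotated])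
  next
    fix F assume "F \<in> I" then show "AF F \<subseteq> A" using I_iff unfolding goodp_def by blast
  next
    fix F x assume F: "F \<in> I" and x: "x \<in> AF F"
    then have "goodp mult p A (stepp mult p A (AF F) x) \<and> stepp mult p A (AF F) x \<subseteq> linv mult x (AF F)"
      using good_step I_iff[OF F] by blast
    then have "enc (stepp mult p A (AF F) x) \<in> I" "AF (enc (stepp mult p A (AF F) x)) \<subseteq> linv mult x (AF F)"
      using encI AFenc by simp_all
    then show "\<exists>G\<in>I. AF G \<subseteq> linv mult x (AF F)" by (rule bexI[rotated])
  next
    fix \<F> assume F: "finite \<F> \<and> \<F> \<noteq> {} \<and> \<F> \<subseteq> I"
    have "\<forall>f\<in>\<F>. AF f \<in> p" using F I_iff unfolding goodp_def by blast
    then have "(\<Inter>F\<in>\<F>. AF F) \<in> p" using p_Inter[of \<F> AF] F by blast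
    then show "Jdelta_set mult (\<Inter>F\<in>\<F>. AF F)" by (rule p_J)
  qed
qed

end

theorem theorem4p4:
  fixes mult :: "'a \<Rightarrow> 'a \<Rightarrow> 'a option" and A :: "'a set" and p :: "'a set set"
  assumes "partial_semigroup mult"
    and "adequate mult"
    and "A \<in> p"
    and "p \<in> Jdelta mult"
    and "umult mult p p = p"
  shows "(\<exists>T :: 'a list set. T \<noteq> {} \<and>
            (\<forall>f\<in>T. set f \<subseteq> A) \<and>
            (\<forall>f\<in>T. \<forall>x\<in>Bf f T. Bf (f @ [x]) T \<subseteq> linv mult x (Bf f T)) \<and>
            (\<forall>F. finite F \<and> F \<noteq> {} \<and> F \<subseteq> T \<longrightarrow> Jdelta_set mult (\<Inter>f\<in>F. Bf f T)))
       \<and> (\<exists>(I :: 'a list set set) (AF :: 'a list set \<Rightarrow> 'a set). I \<noteq> {} \<and>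
            (\<forall>F\<in>I. \<forall>G\<in>I. \<exists>H\<in>I. AF H \<subseteq> AF F \<inter> AF G) \<and>
            (\<forall>F\<in>I. AF F \<subseteq> A) \<and>
            (\<forall>F\<in>I. \<forall>x\<in>AF F. \<exists>G\<in>I. AF G \<subseteq> linv mult x (AF F)) \<and>
            (\<forall>\<F>. finite \<F> \<and> \<F> \<noteq> {} \<and> \<F> \<subseteq> I \<longrightarrow> Jdelta_set mult (\<Inter>F\<in>\<F>. AF F)))"
proof -
  interpret ctx mult A p using assms(1,3,4,5) by unfold_locales
  show ?thesis using part1 part2 by (rule conjI)
qed

end
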